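(* Let $X$ be a compact subset of $\mathbb{C}^2$, let $m,n$ be positive integers, and let $\pi:\mathbb{C}^2\to\mathbb{C}^2$ be defined by $\pi(z,w)=(z^m,w^n)$. Suppose $\pi^{-1}(X)=\bigcup_{1\le k\le m,\,1\le l\le n}X_{kl}$, where $X_{11}$ is compact and $$X_{kl}=\Big\{\Big(e^{2\pi i(k-1)/m}z,\; e^{2\pi i(l-1)/n}w\Big): (z,w)\in X_{11}\Big\}\quad (1\le k\le m,\ 1\le l\le n).$$ If $R(\pi^{-1}(X))=C(\pi^{-1}(X))$, then $R(X)=C(X)$.
   Context: For a compact set $K\subset\mathbb{C}^2$: $C(K)$ is the algebra of continuous complex-valued functions on $K$ with the sup norm, and $R(K)$ is the closure in $C(K)$ of the rational functions with poles off $K$. *)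

theory Defs
  imports "HOL-Analysis.Analysis"
begin

definition poly2 :: "(complex \<times> complex \<Rightarrow> complex) \<Rightarrow> bool" where
  "poly2 p \<longleftrightarrow> (\<exists>N::nat. \<exists>c::nat \<Rightarrow> nat \<Rightarrow> complex.
      \<forall>z w. p (z, w) = (\<Sum>i<N. \<Sum>j<N. c i j * z ^ i * w ^ j))"

definition rational_off :: "(complex \<times> complex) set \<Rightarrow> (complex \<times> complex \<Rightarrow> complex) \<Rightarrow> bool" where
  "rational_off K r \<longleftrightarrow> (\<exists>p q. poly2 p \<and> poly2 q \<and> (\<forall>x\<in>K. q x \<noteq> 0) \<and>
      (\<forall>x\<in>K. r x = p x / q x))"

definition R_eq_C :: "(complex \<times> complex) set \<Rightarrow> bool" where
  "R_eq_C K \<longleftrightarrow> (\<forall>f. continuous_on K f \<longrightarrow>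
      (\<forall>e>0. \<exists>r. rational_off K r \<and> (\<forall>x\<in>K. norm (f x - r x) \<le> e)))"

end

theory Submission
  imports Defs
begin


lemma poly2_gen:
  fixes T :: "'a set"
  assumes "finite T" "\<And>z w. p (z, w) = (\<Sum>t\<in>T. c t * z ^ a t * w ^ b t)"
  shows "poly2 p"
proof -
  define N where "N = Suc (Max (a ` T \<union> b ` T \<union> {0}))"
  have aN: "a t < N" and bN: "b t < N" if "t \<in> T" for t
  proof -
    have fin: "finite (a ` T \<union> b ` T \<union> {0})" using assms(1) by simp
    have "a t \<le> Max (a ` T \<union> b ` T \<union> {0})" "b t \<le> Max (a ` T \<union> b ` T \<union> {0})"
      using that by (intro Max_ge[OF fin]; simp)+
    then show "a t < N" "b t < N" unfolding N_def by simp_all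
  qed
  define C where "C i j = (\<Sum>t\<in>T. if a t = i \<and> b t = j then c t else 0)" for i j
  have "(\<Sum>i<N. \<Sum>j<N. C i j * z ^ i * w ^ j) = p (z, w)" for z w
  proof -
    have "(\<Sum>i<N. \<Sum>j<N. C i j * z ^ i * w ^ j)
        = (\<Sum>i<N. \<Sum>j<N. \<Sum>t\<in>T. if a t = i \<and> b t = j then c t * z ^ a t * w ^ b t else 0)"
      unfolding C_def sum_distrib_right by (intro sum.cong refl) auto
    also have "\<dots> = (\<Sum>i<N. \<Sum>t\<in>T. \<Sum>j<N. if a t = i \<and> b t = j then c t * z ^ a t * w ^ b t else 0)"
      by (rule sum.cong[OF refl], rule sum.swap)
    also have "\<dots> = (\<Sum>t\<in>T. \<Sum>i<N. \<Sum>j<N. if a t = i \<and> b t = j then c t * z ^ a t * w ^ b t else 0)"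
      by (rule sum.swap)
    also have "\<dots> = (\<Sum>t\<in>T. c t * z ^ a t * w ^ b t)"
    proof (rule sum.cong[OF refl])
      fix t assume t: "t \<in> T"
      have "(\<Sum>i<N. \<Sum>j<N. if a t = i \<and> b t = j then c t * z ^ a t * w ^ b t else 0)
          = (\<Sum>i<N. if a t = i then c t * z ^ a t * w ^ b t else 0)"
        using bN[OF t] by (intro sum.cong refl) (auto simp: if_distrib cong: if_cong)
      also have "\<dots> = c t * z ^ a t * w ^ b t" using aN[OF t] by simp
      finally show "(\<Sum>i<N. \<Sum>j<N. if a t = i \<and> b t = j then c t * z ^ a t * w ^ b t else 0) = c t * z ^ a t * w ^ b t" .
    qed
    finally show ?thesis using assms(2) by simp
  qed
  then show ?thesis unfolding poly2_def by (intro exI[of _ N] exI[of _ C] allI) simp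
qed

lemma poly2_D:
  assumes "poly2 p"
  obtains T :: "(nat \<times> nat) set" and c a b where "finite T"
    "\<And>z w. p (z, w) = (\<Sum>t\<in>T. c t * z ^ a t * w ^ b t)"
proof -
  obtain N c where h: "\<And>z w. p (z, w) = (\<Sum>i<N. \<Sum>j<N. c i j * z ^ i * w ^ j)"
    using assms unfolding poly2_def by blast
  have "p (z, w) = (\<Sum>t\<in>{..<N}\<times>{..<N}. (case_prod c) t * z ^ fst t * w ^ snd t)" for z w
    unfolding h sum.cartesian_product by (simp add: case_prod_beta)
  then show ?thesis using that[of "{..<N}\<times>{..<N}"] by blast
qed

lemma poly2_const: "poly2 (\<lambda>x. k)"
  by (rule poly2_gen[of "{()}" "\<lambda>x. k" "\<lambda>_. k" "\<lambda>_. 0" "\<lambda>_. 0"]) simp_all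

lemma poly2_mult:
  assumes "poly2 p" "poly2 q" shows "poly2 (\<lambda>x. p x * q x)"
proof -
  obtain T1 :: "(nat\<times>nat) set" and c1 a1 b1 where t1: "finite T1" "\<And>z w. p (z, w) = (\<Sum>t\<in>T1. c1 t * z ^ a1 t * w ^ b1 t)"
    using poly2_D[OF assms(1)] by metis
  obtain T2 :: "(nat\<times>nat) set" and c2 a2 b2 where t2: "finite T2" "\<And>z w. q (z, w) = (\<Sum>t\<in>T2. c2 t * z ^ a2 t * w ^ b2 t)"
    using poly2_D[OF assms(2)] by metis
  show ?thesis
  proof (rule poly2_gen[of "T1 \<times> T2" _ "\<lambda>(t,s). c1 t * c2 s" "\<lambda>(t,s). a1 t + a2 s" "\<lambda>(t,s). b1 t + b2 s"])
    show "finite (T1 \<times> T2)" using t1 t2 by simp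
    fix z w
    show "p (z, w) * q (z, w) = (\<Sum>ts\<in>T1 \<times> T2. (case ts of (t, s) \<Rightarrow> c1 t * c2 s) * z ^ (case ts of (t, s) \<Rightarrow> a1 t + a2 s) *
              w ^ (case ts of (t, s) \<Rightarrow> b1 t + b2 s))"
      unfolding t1 t2 sum_product sum.cartesian_product
      by (intro sum.cong refl) (auto simp: power_add algebra_simps)
  qed
qed

lemma poly2_add:
  assumes "poly2 p" "poly2 q" shows "poly2 (\<lambda>x. p x + q x)"
proof -
  obtain T1 :: "(nat\<times>nat) set" and c1 a1 b1 where t1: "finite T1" "\<And>z w. p (z, w) = (\<Sum>t\<in>T1. c1 t * z ^ a1 t * w ^ b1 t)"
    using poly2_D[OF assms(1)] by metis
  obtain T2 :: "(nat\<times>nat) set" and c2 a2 b2 where t2: "finite T2" "\<And>z w. q (z, w) = (\<Sum>t\<in>T2. c2 t * z ^ a2 t * w ^ b2 t)"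
    using poly2_D[OF assms(2)] by metis
  show ?thesis
  proof (rule poly2_gen[of "T1 <+> T2" _ "case_sum c1 c2" "case_sum a1 a2" "case_sum b1 b2"])
    show "finite (T1 <+> T2)" using t1 t2 by simp
    fix z w
    show "p (z, w) + q (z, w) = (\<Sum>t\<in>T1 <+> T2. case_sum c1 c2 t * z ^ case_sum a1 a2 t * w ^ case_sum b1 b2 t)"
      unfolding t1 t2 using t1(1) t2(1) by (simp add: sum.Plus o_def)
  qed
qed

lemma poly2_sum: "finite A \<Longrightarrow> (\<And>g. g \<in> A \<Longrightarrow> poly2 (F g)) \<Longrightarrow> poly2 (\<lambda>x. \<Sum>g\<in>A. F g x)"
  by (induction A rule: finite_induct) (auto intro: poly2_add poly2_const)

lemma poly2_prod: "finite A \<Longrightarrow> (\<And>g. g \<in> A \<Longrightarrow> poly2 (F g)) \<Longrightarrow> poly2 (\<lambda>x. \<Prod>g\<in>A. F g x)"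
  by (induction A rule: finite_induct) (auto intro: poly2_mult poly2_const)

lemma poly2_scale:
  assumes "poly2 p" shows "poly2 (\<lambda>x. p (\<alpha> * fst x, \<beta> * snd x))"
proof -
  obtain T :: "(nat\<times>nat) set" and c a b where t: "finite T" "\<And>z w. p (z, w) = (\<Sum>t\<in>T. c t * z ^ a t * w ^ b t)"
    using poly2_D[OF assms] by metis
  show ?thesis
    by (rule poly2_gen[of T _ "\<lambda>t. c t * \<alpha> ^ a t * \<beta> ^ b t" a b])
       (auto simp: t power_mult_distrib algebra_simps)
qed


definition rt :: "nat \<Rightarrow> nat \<Rightarrow> complex" where
  "rt m j = exp (2 * of_real pi * \<i> * of_nat j / of_nat m)"

definition act :: "nat \<Rightarrow> nat \<Rightarrow> nat \<times> nat \<Rightarrow> complex \<times> complex \<Rightarrow> complex \<times> complex" where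
  "act m n g x = (rt m (fst g) * fst x, rt n (snd g) * snd x)"

lemma rt_pow: "rt m j ^ k = rt m (j * k)"
  unfolding rt_def exp_of_nat_mult[symmetric] by (simp add: algebra_simps)

lemma rt_add: "rt m a * rt m b = rt m (a + b)"
  unfolding rt_def exp_add[symmetric] by (simp add: add_divide_distrib algebra_simps)

lemma rt_mod: "m > 0 \<Longrightarrow> rt m (a mod m) = rt m a"
  unfolding rt_def by (subst complex_root_unity_eq) auto

lemma rt_eq_1: "m > 0 \<Longrightarrow> rt m a = 1 \<longleftrightarrow> m dvd a"
  unfolding rt_def by (rule complex_root_unity_eq_1) simp

lemma rt_pow_m: "m > 0 \<Longrightarrow> rt m j ^ m = 1"
  unfolding rt_def by (rule complex_root_unity) simp

lemma rt_sum: assumes "m > 0" shows "(\<Sum>k<m. rt m (i * k)) = (if m dvd i then of_nat m else 0)"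
proof -
  have "(\<Sum>k<m. rt m (i * k)) = (\<Sum>k<m. rt m i ^ k)" by (simp add: rt_pow)
  also have "\<dots> = (if m dvd i then of_nat m else 0)"
  proof (cases "m dvd i")
    case True
    then have "rt m i = 1" using rt_eq_1[OF assms] by simp
    then show ?thesis using True by simp
  next
    case False
    then have "rt m i \<noteq> 1" using rt_eq_1[OF assms] by simp
    then show ?thesis using False by (simp add: sum_gp_strict rt_pow_m[OF assms])
  qed
  finally show ?thesis .
qed

lemma act_pow:
  assumes "m > 0" "n > 0"
  shows "(\<lambda>(z, w). (z ^ m, w ^ n)) (act m n g x) = (\<lambda>(z, w). (z ^ m, w ^ n)) x"
  using assms by (simp add: act_def case_prod_beta power_mult_distrib rt_pow_m)

lemma act_act: "act m n g (act m n h x) = act m n (fst g + fst h, snd g + snd h) x"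
  by (simp add: act_def mult.assoc[symmetric] rt_add add.commute)

lemma act_mod: "m > 0 \<Longrightarrow> n > 0 \<Longrightarrow> act m n (a mod m, b mod n) x = act m n (a, b) x"
  by (simp add: act_def rt_mod)

lemma poly2_invariant:
  assumes m: "m > 0" and n: "n > 0" and "poly2 F"
    and inv: "\<And>g x. g \<in> {..<m} \<times> {..<n} \<Longrightarrow> F (act m n g x) = F x"
  shows "\<exists>F'. poly2 F' \<and> (\<forall>z w. F (z, w) = F' (z ^ m, w ^ n))"
proof -
  obtain T :: "(nat \<times> nat) set" and c a b where t: "finite T"
    "\<And>z w. F (z, w) = (\<Sum>t\<in>T. c t * z ^ a t * w ^ b t)"
    using poly2_D[OF assms(3)] by metis
  define S where "S = {t\<in>T. m dvd a t \<and> n dvd b t}"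
  have finS: "finite S" using t(1) unfolding S_def by simp
  define F' where "F' = (\<lambda>(u::complex, v::complex). \<Sum>t\<in>S. c t * u ^ (a t div m) * v ^ (b t div n))"
  have pF': "poly2 F'"
    by (rule poly2_gen[OF finS, of F' c "\<lambda>t. a t div m" "\<lambda>t. b t div n"]) (simp add: F'_def)
  have key: "F (z, w) = F' (z ^ m, w ^ n)" for z w
  proof -
    have "of_nat (m * n) * F (z, w) = (\<Sum>k<m. \<Sum>l<n. F (act m n (k, l) (z, w)))"
      using inv by simp
    also have "\<dots> = (\<Sum>k<m. \<Sum>l<n. \<Sum>t\<in>T. c t * z ^ a t * w ^ b t * (rt m (a t * k) * rt n (b t * l)))"
      unfolding act_def by (simp add: t(2) power_mult_distrib rt_pow mult.commute mult.left_commute)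
    also have "\<dots> = (\<Sum>k<m. \<Sum>t\<in>T. \<Sum>l<n. c t * z ^ a t * w ^ b t * (rt m (a t * k) * rt n (b t * l)))"
      by (rule sum.cong[OF refl], rule sum.swap)
    also have "\<dots> = (\<Sum>t\<in>T. \<Sum>k<m. \<Sum>l<n. c t * z ^ a t * w ^ b t * (rt m (a t * k) * rt n (b t * l)))"
      by (rule sum.swap)
    also have "\<dots> = (\<Sum>t\<in>T. c t * z ^ a t * w ^ b t * ((\<Sum>k<m. rt m (a t * k)) * (\<Sum>l<n. rt n (b t * l))))"
      unfolding sum_product by (simp add: sum_distrib_left)
    also have "\<dots> = (\<Sum>t\<in>T. if m dvd a t \<and> n dvd b t then of_nat (m * n) * (c t * z ^ a t * w ^ b t) else 0)"
      by (intro sum.cong refl) (simp add: rt_sum m n)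
    also have "\<dots> = of_nat (m * n) * (\<Sum>t\<in>S. c t * z ^ a t * w ^ b t)"
      unfolding S_def by (simp add: sum.inter_filter[OF t(1)] sum_distrib_left) (intro sum.cong refl, simp)
    also have "(\<Sum>t\<in>S. c t * z ^ a t * w ^ b t) = F' (z ^ m, w ^ n)"
      unfolding F'_def prod.case by (intro sum.cong refl) (auto simp: S_def power_mult[symmetric])
    finally show ?thesis using m n by simp
  qed
  show ?thesis using pF' key by blast
qed


lemma modinj_aux: fixes a b k m :: nat assumes "a \<le> b" "b < m" "(a + k) mod m = (b + k) mod m" shows "a = b"
proof -
  have "m dvd (b + k) - (a + k)" using assms(1,3) mod_eq_dvd_iff_nat[of "a + k" "b + k" m] by simp
  then have "m dvd b - a" by simp
  then show ?thesis using assms(1,2) nat_dvd_not_less[of "b - a" m] by (cases "b - a = 0") auto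
qed

lemma modinj: fixes a b k m :: nat assumes "a < m" "b < m" "(a + k) mod m = (b + k) mod m" shows "a = b"
  using modinj_aux[of a b m k] modinj_aux[of b a m k] assms by (cases "a \<le> b") auto

lemma shift_bij:
  fixes m n :: nat and g0 :: "nat \<times> nat"
  assumes "m > 0" "n > 0"
  shows "bij_betw (\<lambda>g. ((fst g + fst g0) mod m, (snd g + snd g0) mod n)) ({..<m} \<times> {..<n}) ({..<m} \<times> {..<n})"
proof -
  let ?t = "\<lambda>g. ((fst g + fst g0) mod m, (snd g + snd g0) mod n)"
  let ?G = "{..<m} \<times> {..<n}"
  have inj: "inj_on ?t ?G"
  proof (rule inj_onI)
    fix g h assume g: "g \<in> ?G" and h: "h \<in> ?G" and e: "?t g = ?t h"
    have "fst g = fst h"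
      by (rule modinj[where k="fst g0" and m=m]) (use g h e in auto)
    moreover have "snd g = snd h"
      by (rule modinj[where k="snd g0" and m=n]) (use g h e in auto)
    ultimately show "g = h" by (simp add: prod_eq_iff)
  qed
  have sub: "?t ` ?G \<subseteq> ?G" using assms by auto
  have "?t ` ?G = ?G" by (rule endo_inj_surj[OF _ sub inj]) simp
  then show ?thesis using inj by (simp add: bij_betw_def)
qed

lemma act_shift:
  assumes "m > 0" "n > 0"
  shows "act m n g (act m n g0 x) = act m n ((fst g + fst g0) mod m, (snd g + snd g0) mod n) x"
  using assms by (simp add: act_act act_mod)

theorem lemma3p3:
  fixes X X11 :: "(complex \<times> complex) set" and m n :: nat
  assumes "compact X" and "m > 0" and "n > 0" and "compact X11"
    and "(\<lambda>(z, w). (z ^ m, w ^ n)) -` X =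
      (\<Union>k\<in>{1..m}. \<Union>l\<in>{1..n}.
        (\<lambda>(z, w). (exp (2 * of_real pi * \<i> * of_nat (k - 1) / of_nat m) * z,
                    exp (2 * of_real pi * \<i> * of_nat (l - 1) / of_nat n) * w)) ` X11)"
    and "R_eq_C ((\<lambda>(z, w). (z ^ m, w ^ n)) -` X)"
  shows "R_eq_C X"
proof -
  have m: "m > 0" and n: "n > 0" using assms by auto
  define pi2 where "pi2 = (\<lambda>(z::complex, w::complex). (z ^ m, w ^ n))"
  define Y where "Y = pi2 -` X"
  define G where "G = {..<m} \<times> {..<n}"
  have finG: "finite G" unfolding G_def by simp
  have cardG: "card G = m * n" unfolding G_def by (simp add: card_cartesian_product)
  have pi_act: "pi2 (act m n g x) = pi2 x" for g x
    unfolding pi2_def using act_pow[OF m n] by simp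
  have Yact: "act m n g y \<in> Y" if "y \<in> Y" for g y
    using that pi_act unfolding Y_def by simp
  have surj: "\<exists>y. pi2 y = u" for u
  proof -
    obtain z where z: "fst u = z ^ m" using exists_complex_root[of m "fst u"] m by auto
    obtain w where w: "snd u = w ^ n" using exists_complex_root[of n "snd u"] n by auto
    have "pi2 (z, w) = u" using z w unfolding pi2_def by (simp add: prod_eq_iff)
    then show ?thesis by blast
  qed
  have RY: "R_eq_C Y" using assms(6) unfolding Y_def pi2_def .
  have cpi: "continuous_on Y pi2" unfolding pi2_def case_prod_beta
    by (intro continuous_intros)
  have piY: "pi2 ` Y \<subseteq> X" unfolding Y_def by auto
  show ?thesis
    unfolding R_eq_C_def
  proof (intro allI impI)
    fix f :: "complex \<times> complex \<Rightarrow> complex" and e :: real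
    assume fc: "continuous_on X f" and e: "e > 0"
    have "continuous_on Y (f \<circ> pi2)"
      by (rule continuous_on_compose[OF cpi continuous_on_subset[OF fc piY]])
    then obtain r where rr: "rational_off Y r" and re: "\<forall>x\<in>Y. norm ((f \<circ> pi2) x - r x) \<le> e"
      using RY e unfolding R_eq_C_def by blast
    obtain p q where pq: "poly2 p" "poly2 q" "\<forall>x\<in>Y. q x \<noteq> 0" "\<forall>x\<in>Y. r x = p x / q x"
      using rr unfolding rational_off_def by blast
    define Q where "Q x = (\<Prod>g\<in>G. q (act m n g x))" for x
    define P where "P x = (\<Sum>g\<in>G. p (act m n g x) * (\<Prod>h\<in>G-{g}. q (act m n h x)))" for x
    have pact: "poly2 (\<lambda>x. F (act m n g x))" if "poly2 F" for F g
      unfolding act_def using poly2_scale[OF that] by simp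
    have pQ: "poly2 Q" unfolding Q_def
      by (intro poly2_prod finG pact pq)
    have pP: "poly2 P" unfolding P_def
      by (intro poly2_sum finG poly2_mult pact pq poly2_prod) (simp add: finG)
    have Qinv: "Q (act m n g0 x) = Q x" if "g0 \<in> G" for g0 x
    proof -
      let ?t = "\<lambda>g. ((fst g + fst g0) mod m, (snd g + snd g0) mod n)"
      have b: "bij_betw ?t G G" unfolding G_def by (rule shift_bij[OF m n])
      have "Q (act m n g0 x) = (\<Prod>g\<in>G. q (act m n (?t g) x))"
        unfolding Q_def by (simp add: act_shift[OF m n])
      also have "\<dots> = Q x" unfolding Q_def by (rule prod.reindex_bij_betw[OF b])
      finally show ?thesis .
    qed
    have Pinv: "P (act m n g0 x) = P x" if "g0 \<in> G" for g0 x
    proof -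
      let ?t = "\<lambda>g. ((fst g + fst g0) mod m, (snd g + snd g0) mod n)"
      have b: "bij_betw ?t G G" unfolding G_def by (rule shift_bij[OF m n])
      have b2: "bij_betw ?t (G - {g}) (G - {?t g})" if "g \<in> G" for g
      proof (rule bij_betw_subset[OF b])
        show "G - {g} \<subseteq> G" by auto
        have "?t ` (G - {g}) = ?t ` G - ?t ` {g}"
          using b that by (intro inj_on_image_set_diff) (auto simp: bij_betw_def)
        then show "?t ` (G - {g}) = G - {?t g}" using b by (simp add: bij_betw_def)
      qed
      have "P (act m n g0 x) = (\<Sum>g\<in>G. p (act m n (?t g) x) * (\<Prod>h\<in>G-{g}. q (act m n (?t h) x)))"
        unfolding P_def by (simp add: act_shift[OF m n])
      also have "\<dots> = (\<Sum>g\<in>G. p (act m n (?t g) x) * (\<Prod>h\<in>G-{?t g}. q (act m n h x)))"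
        by (intro sum.cong refl arg_cong2[where f="(*)"] prod.reindex_bij_betw[OF b2])
      also have "\<dots> = P x" unfolding P_def
        by (rule sum.reindex_bij_betw[OF b, where g="\<lambda>g. p (act m n g x) * (\<Prod>h\<in>G-{g}. q (act m n h x))"])
      finally show ?thesis .
    qed
    obtain P' where P': "poly2 P'" "\<forall>z w. P (z, w) = P' (z ^ m, w ^ n)"
      using poly2_invariant[OF m n pP] Pinv unfolding G_def by blast
    obtain Q' where Q': "poly2 Q'" "\<forall>z w. Q (z, w) = Q' (z ^ m, w ^ n)"
      using poly2_invariant[OF m n pQ] Qinv unfolding G_def by blast
    have P'pi: "P' (pi2 y) = P y" for y using P'(2) unfolding pi2_def by (cases y) simp
    have Q'pi: "Q' (pi2 y) = Q y" for y using Q'(2) unfolding pi2_def by (cases y) simp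
    define s where "s u = P' u / (of_nat (m * n) * Q' u)" for u
    have Qnz: "Q y \<noteq> 0" if "y \<in> Y" for y
      unfolding Q_def using finG pq(3) Yact[OF that] by (simp add: prod_zero_iff)
    have main: "u \<in> X \<Longrightarrow> of_nat (m * n) * Q' u \<noteq> 0 \<and> norm (f u - s u) \<le> e" for u
    proof -
      assume u: "u \<in> X"
      obtain y where y: "pi2 y = u" using surj by blast
      have yY: "y \<in> Y" using u y unfolding Y_def by simp
      have Qy: "Q y \<noteq> 0" by (rule Qnz[OF yY])
      have Qu: "Q' u = Q y" using Q'pi[of y] y by simp
      have nz: "of_nat (m * n) * Q' u \<noteq> 0" using Qy m n Qu by simp
      have PQ: "P y / Q y = (\<Sum>g\<in>G. r (act m n g y))"
      proof -
        have "P y / Q y = (\<Sum>g\<in>G. p (act m n g y) * (\<Prod>h\<in>G-{g}. q (act m n h y)) / Q y)"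
          unfolding P_def by (simp add: sum_divide_distrib)
        also have "\<dots> = (\<Sum>g\<in>G. r (act m n g y))"
        proof (rule sum.cong[OF refl])
          fix g assume g: "g \<in> G"
          have Qs: "Q y = q (act m n g y) * (\<Prod>h\<in>G-{g}. q (act m n h y))"
            unfolding Q_def using finG g by (simp add: prod.remove)
          have "(\<Prod>h\<in>G-{g}. q (act m n h y)) \<noteq> 0" using Qy Qs by auto
          then show "p (act m n g y) * (\<Prod>h\<in>G-{g}. q (act m n h y)) / Q y = r (act m n g y)"
            unfolding Qs using pq(4) Yact[OF yY] by simp
        qed
        finally show ?thesis .
      qed
      have su: "s u = (\<Sum>g\<in>G. r (act m n g y)) / of_nat (m * n)"
      proof -
        have Pu: "P' u = P y" using P'pi[of y] y by simp
        show ?thesis unfolding s_def Pu Qu PQ[symmetric] by (simp add: divide_divide_eq_left mult.commute)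
      qed
      have fu: "f u = (\<Sum>g\<in>G. f (pi2 (act m n g y))) / of_nat (m * n)"
        using m n y cardG by (simp add: pi_act)
      have "f u - s u = (\<Sum>g\<in>G. f (pi2 (act m n g y)) - r (act m n g y)) / of_nat (m * n)"
        unfolding fu su by (simp add: sum_subtractf diff_divide_distrib)
      then have "norm (f u - s u) = norm (\<Sum>g\<in>G. f (pi2 (act m n g y)) - r (act m n g y)) / real (m * n)"
        by (simp add: norm_divide norm_mult)
      also have "\<dots> \<le> (\<Sum>g\<in>G. e) / real (m * n)"
        using re Yact[OF yY] by (intro divide_right_mono order.trans[OF norm_sum sum_mono]) auto
      also have "\<dots> = e" using cardG m n by simp
      finally show ?thesis using nz by simp
    qed
    show "\<exists>r. rational_off X r \<and> (\<forall>x\<in>X. norm (f x - r x) \<le> e)"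
    proof (intro exI conjI)
      show "rational_off X s" unfolding rational_off_def
        by (rule exI[of _ P'], rule exI[of _ "\<lambda>u. of_nat (m * n) * Q' u"])
           (use P'(1) Q'(1) main in \<open>auto intro: poly2_mult poly2_const simp: s_def\<close>)
      show "\<forall>x\<in>X. norm (f x - s x) \<le> e" using main by blast
    qed
  qed
qed

end
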